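(* Let $n\ge 2$, $m\in\mathbb{Z}$, and $1\le k\le n-1$. Then the closure $B(2n,2n-2+2mn,2k-1)$ of the braid $(\sigma_1\sigma_2\cdots\sigma_{2k-1})(\sigma_1\sigma_2\cdots\sigma_{2n-1})^{2n-2+2mn}$ on $2n$ strands is a knot.
   Context: $\sigma_i$ are the standard Artin generators of the braid group ($\sigma_i$ a right-handed half twist of strands $i,i+1$), braids composed right to left. *)

theory Defs
  imports Main
begin

text \<open>Braid words on strands 1..N: a letter is a nonzero integer a, standing for
 sigma_|a| if a > 0 and sigma_|a| inverse if a < 0.  A word [a1,...,ar] denotes the
 product a1 a2 ... ar (composed right to left).\<close>

type_synonym braid_word = "int list"

definition valid_word :: "nat \<Rightarrow> braid_word \<Rightarrow> bool" where
  "valid_word N w \<longleftrightarrow> (\<forall>a\<in>set w. a \<noteq> 0 \<and> nat \<bar>a\<bar> \<le> N - 1)"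

definition gen_word :: "nat \<Rightarrow> nat \<Rightarrow> braid_word" where
  "gen_word i j = map int [i..<j+1]"

definition braid_inv :: "braid_word \<Rightarrow> braid_word" where
  "braid_inv w = rev (map uminus w)"

definition braid_pow :: "braid_word \<Rightarrow> int \<Rightarrow> braid_word" where
  "braid_pow w e = (if 0 \<le> e then concat (replicate (nat e) w)
                    else concat (replicate (nat (- e)) (braid_inv w)))"

text \<open>Underlying permutation of strand positions: sigma_i^{\<pm>1} swaps positions i, i+1.\<close>
definition strand_swap :: "nat \<Rightarrow> nat \<Rightarrow> nat" where
  "strand_swap i x = (if x = i then i + 1 else if x = i + 1 then i else x)"

definition braid_perm :: "braid_word \<Rightarrow> nat \<Rightarrow> nat" where
  "braid_perm w = foldr (\<lambda>a p. strand_swap (nat \<bar>a\<bar>) \<circ> p) w id"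

text \<open>The closure of a braid on N strands has one component per cycle of its
 permutation; it is a knot iff that permutation acts transitively on {1..N}.\<close>
definition closure_is_knot :: "nat \<Rightarrow> braid_word \<Rightarrow> bool" where
  "closure_is_knot N w \<longleftrightarrow> valid_word N w \<and>
     (\<forall>i\<in>{1..N}. \<forall>j\<in>{1..N}. \<exists>k::nat. (braid_perm w ^^ k) i = j)"

end

theory Submission
  imports Defs
begin


lemma bp_cons: "braid_perm (a # w) = strand_swap (nat \<bar>a\<bar>) \<circ> braid_perm w"
  by (simp add: braid_perm_def)
lemma foldr_comp: "foldr (\<lambda>a p. strand_swap (nat \<bar>a\<bar>) \<circ> p) xs p = braid_perm xs \<circ> p"
  by (induction xs) (auto simp: braid_perm_def)
lemma bp_append: "braid_perm (xs @ ys) = braid_perm xs \<circ> braid_perm ys"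
  unfolding braid_perm_def foldr_append by (rule foldr_comp[unfolded braid_perm_def])
lemma bp_rep: "braid_perm (concat (replicate t w)) = braid_perm w ^^ t"
  by (induction t) (simp_all add: bp_append, simp add: braid_perm_def)

lemma bp_gen: "braid_perm (map int [1..<Suc j]) x =
   (if 1 \<le> x \<and> x \<le> j then x+1 else if x = j+1 then 1 else x)"
proof (induction j arbitrary: x)
  case 0
  then show ?case by (simp add: braid_perm_def)
next
  case (Suc j)
  have s1: "braid_perm [int (Suc j)] = strand_swap (Suc j)"
    by (simp only: bp_cons nat_int abs_of_nat) (simp add: braid_perm_def)
  have "map int [1..<Suc (Suc j)] = map int [1..<Suc j] @ [int (Suc j)]" by simp
  then have "braid_perm (map int [1..<Suc (Suc j)]) = braid_perm (map int [1..<Suc j]) \<circ> strand_swap (Suc j)"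
    by (simp only: bp_append s1)
  then show ?case using Suc by (auto simp: strand_swap_def)
qed

lemma bp_geninv: "braid_perm (braid_inv (map int [1..<Suc j])) x =
   (if 2 \<le> x \<and> x \<le> j+1 then x-1 else if x = 1 then j+1 else x)"
proof (induction j arbitrary: x)
  case 0
  then show ?case by (simp add: braid_perm_def braid_inv_def)
next
  case (Suc j)
  have "braid_inv (map int [1..<Suc (Suc j)]) = - int (Suc j) # braid_inv (map int [1..<Suc j])"
    by (simp add: braid_inv_def)
  moreover have "nat \<bar>- int (Suc j)\<bar> = Suc j" by simp
  ultimately have "braid_perm (braid_inv (map int [1..<Suc (Suc j)])) = strand_swap (Suc j) \<circ> braid_perm (braid_inv (map int [1..<Suc j]))"
    by (simp only: bp_cons)
  then show ?case using Suc by (auto simp: strand_swap_def)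
qed

lemma cpow:
  fixes N :: nat and c :: "nat \<Rightarrow> nat"
  assumes N: "N \<ge> 1" and hc: "\<And>x. 1 \<le> x \<Longrightarrow> x \<le> N \<Longrightarrow> c x = (if x \<le> N - 1 then x+1 else 1)"
    and x: "1 \<le> x" "x \<le> N"
  shows "(c ^^ t) x = nat ((int x - 1 + int t) mod int N) + 1"
proof (induction t)
  case 0
  then show ?case using x by simp
next
  case (Suc t)
  define r where "r = (int x - 1 + int t) mod int N"
  have r: "0 \<le> r" "r < int N" using N by (auto simp: r_def)
  have "(c ^^ Suc t) x = c (nat r + 1)" using Suc by (simp add: r_def)
  also have "\<dots> = (if r + 1 < int N then nat r + 2 else 1)" using hc[of "nat r + 1"] r by auto
  also have "\<dots> = nat ((int x - 1 + int (Suc t)) mod int N) + 1"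
  proof -
    have eq: "(int x - 1 + int (Suc t)) mod int N = (r + 1) mod int N"
      by (simp add: r_def mod_add_left_eq add.assoc)
    show ?thesis
    proof (cases "r + 1 < int N")
      case True
      then show ?thesis using r eq by (simp add: mod_pos_pos_trivial nat_add_distrib)
    next
      case False
      then have "r + 1 = int N" using r by linarith
      then show ?thesis using eq False by simp
    qed
  qed
  finally show ?case .
qed

lemma dpow:
  fixes N :: nat and c :: "nat \<Rightarrow> nat"
  assumes N: "N \<ge> 1" and hc: "\<And>x. 1 \<le> x \<Longrightarrow> x \<le> N \<Longrightarrow> c x = (if 2 \<le> x then x-1 else N)"
    and x: "1 \<le> x" "x \<le> N"
  shows "(c ^^ t) x = nat ((int x - 1 - int t) mod int N) + 1"
proof (induction t)
  case 0
  then show ?case using x by simp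
next
  case (Suc t)
  define r where "r = (int x - 1 - int t) mod int N"
  have r: "0 \<le> r" "r < int N" using N by (auto simp: r_def)
  have "(c ^^ Suc t) x = c (nat r + 1)" using Suc by (simp add: r_def)
  also have "\<dots> = (if 1 \<le> r then nat r else N)" using hc[of "nat r + 1"] r by auto
  also have "\<dots> = nat ((int x - 1 - int (Suc t)) mod int N) + 1"
  proof -
    have "(int x - 1 - int (Suc t)) mod int N = (r - 1) mod int N"
      by (simp add: r_def mod_diff_left_eq algebra_simps)
    moreover have "\<not> 1 \<le> r \<Longrightarrow> (r - 1) mod int N = int N - 1"
    proof -
      assume "\<not> 1 \<le> r"
      then have "r = 0" using r by linarith
      moreover have "(-1::int) mod int N = int N - 1" using N
        by (simp add: zmod_minus1)
      ultimately show ?thesis by simp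
    qed
    ultimately show ?thesis using r
      by (cases "1 \<le> r") (auto simp: mod_pos_pos_trivial)
  qed
  finally show ?case .
qed



lemma chain:
  assumes "\<forall>i<l. f (j + d*Suc i) = j + d*i"
  shows "\<exists>k. (f^^k) (j + d*l) = j"
  using assms
proof (induction l)
  case 0
  then show ?case by (intro exI[of _ 0]) simp
next
  case (Suc l)
  then obtain k where "(f^^k) (j + d*l) = j" by auto
  moreover have "f (j + d*Suc l) = j + d*l" using Suc.prems by auto
  moreover have "(f^^(Suc k)) (j + d*Suc l) = (f^^k) (f (j + d*Suc l))"
    by (simp only: funpow_Suc_right comp_def)
  ultimately have "(f^^(Suc k)) (j + d*Suc l) = j" by simp
  then show ?case by blast
qed

lemma reach_all:
  fixes f :: "nat \<Rightarrow> nat" and N K :: nat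
  assumes K: "1 \<le> K" "2*K+2 \<le> N" "even N"
    and hf: "\<And>x. 1 \<le> x \<Longrightarrow> x \<le> N \<Longrightarrow> f x = (if x=1 then N-1 else if x=2 then N
        else if x \<le> 2*K+1 then x-1 else if x = 2*K+2 then 1 else x-2)"
  shows "\<forall>i\<in>{1..N}. \<forall>j\<in>{1..N}. \<exists>k. (f^^k) i = j"
proof -
  define R where "R i j = (\<exists>k. (f^^k) i = j)" for i j
  have Rtrans: "R a c" if ab: "R a b" and bc: "R b c" for a b c
  proof -
    obtain k1 k2 where "(f^^k1) a = b" "(f^^k2) b = c" using ab bc unfolding R_def by blast
    then have "(f^^(k2+k1)) a = c" by (simp add: funpow_add)
    then show ?thesis unfolding R_def by blast
  qed
  have Rstep: "R a (f a)" for a unfolding R_def by (intro exI[of _ 1]) simp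
  have Rrefl: "R a a" for a unfolding R_def by (intro exI[of _ 0]) simp
  have E: "R (j + 2*l) j" if "2*K+2 \<le> j" "even j" "j + 2*l \<le> N" for j l
    unfolding R_def
  proof (rule chain, intro allI impI)
    fix i assume "i < l"
    then show "f (j + 2 * Suc i) = j + 2*i" using hf[of "j + 2 * Suc i"] that by auto
  qed
  have O: "R (j + 2*l) j" if "2*K+1 \<le> j" "odd j" "j + 2*l \<le> N" for j l
    unfolding R_def
  proof (rule chain, intro allI impI)
    fix i assume "i < l"
    then show "f (j + 2 * Suc i) = j + 2*i" using hf[of "j + 2 * Suc i"] that by auto
  qed
  have M: "R (j + l) j" if "2 \<le> j" "j + l \<le> 2*K+1" for j l
  proof -
    have "\<forall>i<l. f (j + 1*Suc i) = j + 1*i"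
    proof (intro allI impI)
      fix i assume "i < l"
      then show "f (j + 1 * Suc i) = j + 1 * i" using hf[of "Suc (j+i)"] that K by auto
    qed
    then show ?thesis using chain[of l f j 1] unfolding R_def by simp
  qed
  have evN: "R x (2*K+2)" if "2*K+2 \<le> x" "even x" "x \<le> N" for x
  proof -
    have e: "2*K+2 + 2*((x - (2*K+2)) div 2) = x" using that by presburger
    have "R (2*K+2 + 2*((x - (2*K+2)) div 2)) (2*K+2)" by (rule E) (use that e in auto)
    then show ?thesis by (simp only: e)
  qed
  have oddN: "R x (2*K+1)" if "2*K+1 \<le> x" "odd x" "x \<le> N" for x
  proof -
    have e: "2*K+1 + 2*((x - (2*K+1)) div 2) = x" using that by presburger
    have "R (2*K+1 + 2*((x - (2*K+1)) div 2)) (2*K+1)" by (rule O) (use that e in auto)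
    then show ?thesis by (simp only: e)
  qed
  have M2: "R x j" if "2 \<le> j" "j \<le> x" "x \<le> 2*K+1" for x j
  proof -
    have "R (j + (x - j)) j" by (rule M) (use that in auto)
    then show ?thesis using that by simp
  qed
  have E2: "R x j" if "2*K+2 \<le> j" "even j" "j \<le> x" "even x" "x \<le> N" for x j
  proof -
    have e: "j + 2*((x - j) div 2) = x" using that by presburger
    have "R (j + 2*((x - j) div 2)) j" by (rule E) (use that e in auto)
    then show ?thesis by (simp only: e)
  qed
  have O2: "R x j" if "2*K+1 \<le> j" "odd j" "j \<le> x" "odd x" "x \<le> N" for x j
  proof -
    have e: "j + 2*((x - j) div 2) = x" using that by presburger
    have "R (j + 2*((x - j) div 2)) j" by (rule O) (use that e in auto)
    then show ?thesis by (simp only: e)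
  qed
  have f22: "f (2*K+2) = 1" using hf[of "2*K+2"] K by auto
  have f2: "f 2 = N" using hf[of 2] K by auto
  have f1: "f 1 = N - 1" using hf[of 1] K by auto
  have N1: "R N 1" using evN[of N] K Rstep[of "2*K+2"] f22 Rtrans by auto
  have two1: "R 2 1" using Rstep[of 2] f2 N1 Rtrans by auto
  have to1: "R x 1" if xr: "1 \<le> x" "x \<le> N" for x
  proof -
    consider "x = 1" | "2 \<le> x \<and> x \<le> 2*K+1" | "2*K+2 \<le> x \<and> even x" | "2*K+2 \<le> x \<and> odd x"
      using xr by linarith
    then show ?thesis
    proof cases
      case 1 then show ?thesis using Rrefl by simp
    next
      case 2
      then have "R x 2" using M2[of 2 x] by auto
      then show ?thesis using two1 Rtrans by blast
    next
      case 3
      then show ?thesis using evN[of x] xr Rstep[of "2*K+2"] f22 Rtrans by auto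
    next
      case 4
      then have "R x (2*K+1)" using oddN[of x] xr by auto
      moreover have "R (2*K+1) 2" using M2[of 2 "2*K+1"] K by auto
      ultimately show ?thesis using two1 Rtrans by blast
    qed
  qed
  have from1: "R 1 x" if xr: "1 \<le> x" "x \<le> N" for x
  proof -
    have "R 1 (N - 1)" using Rstep[of 1] f1 by simp
    consider "x = 1" | "2 \<le> x \<and> x \<le> 2*K+1" | "2*K+2 \<le> x \<and> even x" | "2*K+2 \<le> x \<and> odd x"
      using xr by linarith
    then show ?thesis
    proof cases
      case 1 then show ?thesis using Rrefl by simp
    next
      case 2
      have "R (N - 1) (2*K+1)" using oddN[of "N - 1"] K by auto
      moreover have "R (2*K+1) x" using M2[of x "2*K+1"] 2 by auto
      ultimately show ?thesis using \<open>R 1 (N - 1)\<close> Rtrans by blast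
    next
      case 3
      have "R (2*K+1) 2" using M2[of 2 "2*K+1"] K by auto
      moreover have "R (N - 1) (2*K+1)" using oddN[of "N - 1"] K by auto
      moreover have "R 2 N" using Rstep[of 2] f2 by simp
      moreover have "R N x" using E2[of x N] 3 xr K by auto
      ultimately show ?thesis using \<open>R 1 (N - 1)\<close> Rtrans by blast
    next
      case 4
      have "x \<noteq> N" using 4 K by auto
      then have "x \<le> N - 1" using xr by linarith
      have "R (N - 1) x" using \<open>x \<le> N - 1\<close> O2[of x "N - 1"] 4 xr K by auto
      then show ?thesis using \<open>R 1 (N - 1)\<close> Rtrans by blast
    qed
  qed
  have "\<forall>i\<in>{1..N}. \<forall>j\<in>{1..N}. R i j" using to1 from1 Rtrans by (meson atLeastAtMost_iff)
  then show ?thesis unfolding R_def .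
qed


lemma Pval:
  fixes N x :: nat and e :: int
  assumes N: "N \<ge> 4" and x: "1 \<le> x" "x \<le> N" and e: "e mod int N = -2 mod int N"
  shows "nat ((int x - 1 + e) mod int N) + 1 = (if x = 1 then N - 1 else if x = 2 then N else x - 2)"
proof -
  have "(int x - 1 + e) mod int N = (int x - 1 + -2) mod int N"
    by (rule mod_add_cong[OF refl e])
  then have h: "(int x - 1 + e) mod int N = (int x - 3) mod int N" by simp
  consider "x = 1" | "x = 2" | "x \<ge> 3" using x by linarith
  then show ?thesis
  proof cases
    case 1
    have "(-2::int) mod int N = int N - 2" using N by (simp add: zmod_zminus1_eq_if)
    then show ?thesis using h 1 N by simp
  next
    case 2
    have "(-1::int) mod int N = int N - 1" using N by (simp add: zmod_zminus1_eq_if)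
    then show ?thesis using h 2 N by simp
  next
    case 3
    have "(int x - 3) mod int N = int x - 3" using 3 x by (simp add: mod_pos_pos_trivial)
    then show ?thesis using h 3 by simp
  qed
qed

theorem mainTheorem4:
  fixes n k :: nat and m :: int
  assumes "n \<ge> 2" and "1 \<le> k" and "k \<le> n - 1"
  shows "closure_is_knot (2 * n)
           (gen_word 1 (2 * k - 1) @
            braid_pow (gen_word 1 (2 * n - 1)) (2 * int n - 2 + 2 * m * int n))"
proof -
  define N where "N = 2 * n"
  define e where "e = 2 * int n - 2 + 2 * m * int n"
  have N4: "N \<ge> 4" using assms N_def by simp
  have kN: "2*k+2 \<le> N" using assms N_def by simp
  have emod: "e mod int N = -2 mod int N"
  proof -
    have "e = -2 + int N * (m + 1)" by (simp add: e_def N_def algebra_simps)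
    then show ?thesis by (simp only: mod_mult_self2)
  qed
  define g where "g = braid_perm (gen_word 1 (2 * k - 1))"
  define c where "c = braid_perm (gen_word 1 (N - 1))"
  define P where "P = braid_perm (braid_pow (gen_word 1 (N - 1)) e)"
  have gv: "g y = (if 1 \<le> y \<and> y \<le> 2*k-1 then y+1 else if y = 2*k then 1 else y)" for y
    unfolding g_def gen_word_def using bp_gen[of "2*k-1" y] assms by simp
  have cv: "c x = (if x \<le> N - 1 then x+1 else 1)" if "1 \<le> x" "x \<le> N" for x
    unfolding c_def gen_word_def using bp_gen[of "N-1" x] that N4 by auto
  have dv: "braid_perm (braid_inv (gen_word 1 (N - 1))) x = (if 2 \<le> x then x-1 else N)"
    if "1 \<le> x" "x \<le> N" for x
    unfolding gen_word_def using bp_geninv[of "N-1" x] that N4 by auto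
  have Pv: "P x = (if x = 1 then N - 1 else if x = 2 then N else x - 2)" if x: "1 \<le> x" "x \<le> N" for x
  proof (cases "0 \<le> e")
    case True
    have "P x = (c ^^ nat e) x" unfolding P_def c_def braid_pow_def using True by (simp add: bp_rep)
    also have "\<dots> = nat ((int x - 1 + int (nat e)) mod int N) + 1"
      by (rule cpow) (use N4 cv x in auto)
    also have "\<dots> = nat ((int x - 1 + e) mod int N) + 1" using True by simp
    also have "\<dots> = (if x = 1 then N - 1 else if x = 2 then N else x - 2)"
      by (rule Pval) (use N4 x emod in auto)
    finally show ?thesis .
  next
    case False
    have "P x = (braid_perm (braid_inv (gen_word 1 (N - 1))) ^^ nat (- e)) x"
      unfolding P_def braid_pow_def using False by (simp add: bp_rep)
    also have "\<dots> = nat ((int x - 1 - int (nat (- e))) mod int N) + 1"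
      by (rule dpow) (use N4 dv x in auto)
    also have "\<dots> = nat ((int x - 1 + e) mod int N) + 1" using False by simp
    also have "\<dots> = (if x = 1 then N - 1 else if x = 2 then N else x - 2)"
      by (rule Pval) (use N4 x emod in auto)
    finally show ?thesis .
  qed
  have F: "braid_perm (gen_word 1 (2 * k - 1) @ braid_pow (gen_word 1 (N - 1)) e) = g \<circ> P"
    unfolding g_def P_def by (simp add: bp_append)
  have hf: "(g \<circ> P) x = (if x=1 then N-1 else if x=2 then N
        else if x \<le> 2*k+1 then x-1 else if x = 2*k+2 then 1 else x-2)" if "1 \<le> x" "x \<le> N" for x
    using Pv[OF that] kN assms that by (auto simp: gv; linarith)
  have reach: "\<forall>i\<in>{1..N}. \<forall>j\<in>{1..N}. \<exists>t. ((g \<circ> P)^^t) i = j"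
    by (rule reach_all[where K=k]) (use assms kN hf N_def in auto)
  have valid: "valid_word N (gen_word 1 (2 * k - 1) @ braid_pow (gen_word 1 (N - 1)) e)"
    using kN unfolding valid_word_def gen_word_def braid_pow_def braid_inv_def by auto
  show ?thesis
    using valid reach F unfolding closure_is_knot_def N_def e_def by simp
qed

end
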